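(* Let $N\in\mathbb{N}$, $\lambda$ a partition of length $\le N$ (extended by zeros, $\lambda_j=0$ for $j$ beyond its length), and $x=(x_1,\ldots,x_N)$. Then \[ \operatorname{s}_\lambda(x)=\det\Bigl[\hom_{\lambda_j-j+k}(x_k,x_{k+1},\ldots,x_N)\Bigr]_{j,k=1}^N. \]
   Context: $\operatorname{s}_\lambda$ is the Schur polynomial; $\hom_m$ is the complete homogeneous symmetric polynomial of degree $m$, with $\hom_0=1$ and $\hom_m=0$ for $m<0$. *)

theory Defs
  imports "HOL-Library.Multiset" "Jordan_Normal_Form.Determinant"
begin

definition is_partition :: "nat list \<Rightarrow> bool" where
  "is_partition lam \<longleftrightarrow> sorted (rev lam) \<and> 0 \<notin> set lam"

definition part :: "nat list \<Rightarrow> nat \<Rightarrow> nat" where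
  "part lam j = (if 1 \<le> j \<and> j \<le> length lam then lam ! (j - 1) else 0)"

text \<open>Complete homogeneous symmetric polynomial of degree m in the variables
  x_i, i in S, evaluated: sum over multisets of size m drawn from S.
  h_m = 0 for m < 0, h_0 = 1.\<close>
definition hom :: "int \<Rightarrow> nat set \<Rightarrow> (nat \<Rightarrow> 'a::comm_ring_1) \<Rightarrow> 'a" where
  "hom m S x = (if m < 0 then 0 else
     (\<Sum>M\<in>{M. set_mset M \<subseteq> S \<and> size M = nat m}. \<Prod>\<^sub># (image_mset x M)))"

definition cells :: "nat list \<Rightarrow> (nat \<times> nat) set" where
  "cells lam = {(i, j). 1 \<le> i \<and> i \<le> length lam \<and> 1 \<le> j \<and> j \<le> part lam i}"

definition ssyt :: "nat list \<Rightarrow> nat \<Rightarrow> (nat \<times> nat \<Rightarrow> nat) set" where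
  "ssyt lam N = {T.
     (\<forall>c. c \<notin> cells lam \<longrightarrow> T c = 0) \<and>
     (\<forall>c\<in>cells lam. T c \<in> {1..N}) \<and>
     (\<forall>i j. (i, j) \<in> cells lam \<and> (i, Suc j) \<in> cells lam \<longrightarrow> T (i, j) \<le> T (i, Suc j)) \<and>
     (\<forall>i j. (i, j) \<in> cells lam \<and> (Suc i, j) \<in> cells lam \<longrightarrow> T (i, j) < T (Suc i, j))}"

definition schur :: "nat list \<Rightarrow> nat \<Rightarrow> (nat \<Rightarrow> 'a::comm_ring_1) \<Rightarrow> 'a" where
  "schur lam N x = (\<Sum>T\<in>ssyt lam N. \<Prod>c\<in>cells lam. x (T c))"

end

theory Submission imports Defs "HOL-Library.Disjoint_Sets" "HOL-Library.FuncSet" begin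

lemma hom_empty: "hom m {} x = (if m = 0 then 1 else 0)"
proof -
  have e: "m > 0 \<Longrightarrow> {M. M = {#} \<and> size M = nat m} = {}" by auto
  have z: "{M. set_mset M \<subseteq> {} \<and> size M = 0} = {{#}}" by auto
  show ?thesis
  proof (cases "m > 0")
    case True
    have E: "{M::nat multiset. M = {#} \<and> size M = nat m} = {}" using True by auto
    show ?thesis unfolding hom_def using True by (simp add: E)
  next
    case False then show ?thesis unfolding hom_def using z by (cases "m = 0") auto
  qed
qed

lemma hom_neg: "m < 0 \<Longrightarrow> hom m S x = 0"
  unfolding hom_def by simp

lemma hom_core:
  fixes x :: "nat \<Rightarrow> 'a::comm_ring_1"
  assumes S: "finite S" and a: "a \<notin> S"
  shows "(\<Sum>M\<in>multisets_of_size (insert a S) m. \<Prod>\<^sub># (image_mset x M)) =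
    (\<Sum>r\<in>{..m}. x a ^ r * (\<Sum>M\<in>multisets_of_size S (m - r). \<Prod>\<^sub># (image_mset x M)))"
proof -
  have "(\<Sum>r\<in>{..m}. x a ^ r * (\<Sum>M\<in>multisets_of_size S (m - r). \<Prod>\<^sub># (image_mset x M)))
     = (\<Sum>r\<in>{..m}. \<Sum>M\<in>multisets_of_size S (m - r). x a ^ r * \<Prod>\<^sub># (image_mset x M))"
    by (simp add: sum_distrib_left)
  also have "\<dots> = (\<Sum>(r,M)\<in>Sigma {..m} (\<lambda>r. multisets_of_size S (m - r)). x a ^ r * \<Prod>\<^sub># (image_mset x M))"
    by (rule sum.Sigma) (use S in auto)
  also have "\<dots> = (\<Sum>M\<in>multisets_of_size (insert a S) m. \<Prod>\<^sub># (image_mset x M))"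
  proof (rule sum.reindex_bij_witness[where i = "\<lambda>M. (count M a, filter_mset (\<lambda>y. y \<noteq> a) M)"
        and j = "\<lambda>(r, M). replicate_mset r a + M"])
    fix M assume M: "M \<in> multisets_of_size (insert a S) m"
    show "(case (count M a, filter_mset (\<lambda>y. y \<noteq> a) M) of (r, M) \<Rightarrow> replicate_mset r a + M) = M"
      by (simp add: multiset_eq_iff)
    have sz: "size M = count M a + size (filter_mset (\<lambda>y. y \<noteq> a) M)"
    proof -
      have "M = filter_mset (\<lambda>y. y = a) M + filter_mset (\<lambda>y. y \<noteq> a) M"
        by (simp add: multiset_eq_iff)
      moreover have "filter_mset (\<lambda>y. y = a) M = replicate_mset (count M a) a"
        by (simp add: multiset_eq_iff)
      ultimately show ?thesis by (metis size_replicate_mset size_union)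
    qed
    show "(count M a, filter_mset (\<lambda>y. y \<noteq> a) M) \<in> Sigma {..m} (\<lambda>r. multisets_of_size S (m - r))"
      using M sz by (auto simp: multisets_of_size_def)
  next
    fix rM assume rM: "rM \<in> Sigma {..m} (\<lambda>r. multisets_of_size S (m - r))"
    obtain r M where [simp]: "rM = (r, M)" by fastforce
    from rM have r: "r \<le> m" and MS: "set_mset M \<subseteq> S" and sM: "size M = m - r"
      by (auto simp: multisets_of_size_def)
    have aM: "count M a = 0" using MS a by (meson count_eq_zero_iff subsetD)
    show "(count (case rM of (r, M) \<Rightarrow> replicate_mset r a + M) a,
        filter_mset (\<lambda>y. y \<noteq> a) (case rM of (r, M) \<Rightarrow> replicate_mset r a + M)) = rM"
      using aM by (auto simp: multiset_eq_iff)
    show "(case rM of (r, M) \<Rightarrow> replicate_mset r a + M) \<in> multisets_of_size (insert a S) m"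
      using MS sM r by (auto simp: multisets_of_size_def)
    show "\<Prod>\<^sub># (image_mset x (case rM of (r, M) \<Rightarrow> replicate_mset r a + M)) =
      (case rM of (r, M) \<Rightarrow> x a ^ r * \<Prod>\<^sub># (image_mset x M))"
      by simp
  qed
  finally show ?thesis ..
qed

lemma hom_insert:
  fixes x :: "nat \<Rightarrow> 'a::comm_ring_1"
  assumes S: "finite S" and a: "a \<notin> S" and de: "d \<le> e"
  shows "hom d (insert a S) x = (\<Sum>r\<in>{0..e}. x a ^ nat r * hom (d - r) S x)"
proof (cases "d < 0")
  case True
  then show ?thesis by (auto simp: hom_neg intro!: sum.neutral)
next
  case False
  define m where "m = nat d"
  have dm: "d = int m" using False m_def by auto
  have "(\<Sum>r\<in>{0..e}. x a ^ nat r * hom (d - r) S x) = (\<Sum>r\<in>{0..d}. x a ^ nat r * hom (d - r) S x)"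
    by (rule sum.mono_neutral_right) (use de in \<open>auto simp: hom_neg\<close>)
  also have "\<dots> = (\<Sum>r\<in>int ` {..m}. x a ^ nat r * hom (d - r) S x)"
  proof -
    have "{0..d} = int ` {..m}" unfolding dm
      by (auto simp: image_iff intro!: bexI[where x = "nat _"])
    then show ?thesis by simp
  qed
  also have "\<dots> = (\<Sum>r\<in>{..m}. x a ^ r * hom (int (m - r)) S x)"
    by (subst sum.reindex) (auto simp: dm of_nat_diff intro!: sum.cong)
  also have "\<dots> = (\<Sum>r\<in>{..m}. x a ^ r * (\<Sum>M\<in>multisets_of_size S (m - r). \<Prod>\<^sub># (image_mset x M)))"
  proof -
    have "\<And>r. r \<le> m \<Longrightarrow> nat (int m - int r) = m - r" by simp
    then show ?thesis by (intro sum.cong refl) (auto simp: hom_def multisets_of_size_def dm)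
  qed
  also have "\<dots> = hom d (insert a S) x"
    unfolding hom_def using hom_core[OF S a, of x m] False
    by (simp add: m_def multisets_of_size_def)
  finally show ?thesis ..
qed

lemma det_multilin:
  fixes g :: "nat \<Rightarrow> 'b \<Rightarrow> nat \<Rightarrow> 'a::comm_ring_1" and c :: "nat \<Rightarrow> 'b \<Rightarrow> 'a"
  assumes fin: "\<And>i. i < n \<Longrightarrow> finite (R i)"
  shows "det (mat n n (\<lambda>(i,j). \<Sum>r\<in>R i. c i r * g i r j)) =
    (\<Sum>k\<in>PiE {0..<n} R. (\<Prod>i\<in>{0..<n}. c i (k i)) * det (mat n n (\<lambda>(i,j). g i (k i) j)))"
proof -
  let ?P = "{p. p permutes {0..<n}}"
  have pin: "\<And>p i. p \<in> ?P \<Longrightarrow> i \<in> {0..<n} \<Longrightarrow> p i < n"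
    by (auto dest: permutes_in_image)
  have "det (mat n n (\<lambda>(i,j). \<Sum>r\<in>R i. c i r * g i r j)) =
     (\<Sum>p\<in>?P. signof p * (\<Prod>i\<in>{0..<n}. \<Sum>r\<in>R i. c i r * g i r (p i)))"
    by (subst det_def'[of _ n]) (auto intro!: sum.cong prod.cong simp: pin)
  also have "\<dots> = (\<Sum>p\<in>?P. signof p * (\<Sum>k\<in>PiE {0..<n} R. \<Prod>i\<in>{0..<n}. c i (k i) * g i (k i) (p i)))"
    by (subst prod_sum_PiE) (auto simp: fin)
  also have "\<dots> = (\<Sum>p\<in>?P. \<Sum>k\<in>PiE {0..<n} R. (\<Prod>i\<in>{0..<n}. c i (k i)) * (signof p * (\<Prod>i\<in>{0..<n}. g i (k i) (p i))))"
    by (simp add: sum_distrib_left prod.distrib mult_ac)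
  also have "\<dots> = (\<Sum>k\<in>PiE {0..<n} R. \<Sum>p\<in>?P. (\<Prod>i\<in>{0..<n}. c i (k i)) * (signof p * (\<Prod>i\<in>{0..<n}. g i (k i) (p i))))"
    by (rule sum.swap)
  also have "\<dots> = (\<Sum>k\<in>PiE {0..<n} R. (\<Prod>i\<in>{0..<n}. c i (k i)) * det (mat n n (\<lambda>(i,j). g i (k i) j)))"
    by (intro sum.cong refl, subst det_def'[of _ n]) (auto simp: sum_distrib_left pin intro!: sum.cong prod.cong)
  finally show ?thesis .
qed

definition Dt :: "nat \<Rightarrow> (nat \<Rightarrow> nat) \<Rightarrow> (nat \<Rightarrow> 'a::comm_ring_1) \<Rightarrow> 'a" where
  "Dt N p x = det (mat N N (\<lambda>(j, k). hom (int (p (j + 1)) - int (j + 1) + int (k + 1)) {k + 1..N} x))"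

definition Gm :: "nat \<Rightarrow> (nat \<Rightarrow> int) \<Rightarrow> (nat \<Rightarrow> 'a::comm_ring_1) \<Rightarrow> 'a mat" where
  "Gm N mu x = mat (Suc N) (Suc N) (\<lambda>(i, c). hom (mu i - int (i + 1) + int (c + 1)) {c + 1..N} x)"

lemma hom_expand_entry:
  fixes x :: "nat \<Rightarrow> 'a::comm_ring_1"
  assumes j: "j \<le> N"
  shows "hom (a - int (i+1) + int (j+1)) {j+1..Suc N} x =
    (\<Sum>m\<in>{int (i+1) - int (Suc N)..a}. x (Suc N) ^ nat (a - m) * hom (m - int (i+1) + int (j+1)) {j+1..N} x)"
proof -
  have ins: "{j+1..Suc N} = insert (Suc N) {j+1..N}" using j by auto
  have "hom (a - int (i+1) + int (j+1)) {j+1..Suc N} x =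
     (\<Sum>r\<in>{0..a - int (i+1) + int (Suc N)}. x (Suc N) ^ nat r * hom (a - int (i+1) + int (j+1) - r) {j+1..N} x)"
    unfolding ins by (rule hom_insert) (use j in auto)
  also have "\<dots> = (\<Sum>m\<in>{int (i+1) - int (Suc N)..a}. x (Suc N) ^ nat (a - m) * hom (m - int (i+1) + int (j+1)) {j+1..N} x)"
    by (rule sum.reindex_bij_witness[where i = "\<lambda>m. a - m" and j = "\<lambda>r. a - r"]) (auto simp: algebra_simps)
  finally show ?thesis .
qed

lemma det_expand:
  fixes x :: "nat \<Rightarrow> 'a::comm_ring_1"
  shows "Dt (Suc N) p x = (\<Sum>mu\<in>PiE {0..<Suc N} (\<lambda>i. {int (i+1) - int (Suc N)..int (p (i+1))}).
     (\<Prod>i\<in>{0..<Suc N}. x (Suc N) ^ nat (int (p (i+1)) - mu i)) * det (Gm N mu x))"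
proof -
  have "Dt (Suc N) p x = det (mat (Suc N) (Suc N) (\<lambda>(i,j). \<Sum>m\<in>{int (i+1) - int (Suc N)..int (p (i+1))}.
      x (Suc N) ^ nat (int (p (i+1)) - m) * hom (m - int (i+1) + int (j+1)) {j+1..N} x))"
    unfolding Dt_def
  proof (intro arg_cong[where f = det] eq_matI)
    fix i j assume "i < dim_row (mat (Suc N) (Suc N) (\<lambda>(i,j). \<Sum>m\<in>{int (i+1) - int (Suc N)..int (p (i+1))}.
      x (Suc N) ^ nat (int (p (i+1)) - m) * hom (m - int (i+1) + int (j+1)) {j+1..N} x))"
      "j < dim_col (mat (Suc N) (Suc N) (\<lambda>(i,j). \<Sum>m\<in>{int (i+1) - int (Suc N)..int (p (i+1))}.
      x (Suc N) ^ nat (int (p (i+1)) - m) * hom (m - int (i+1) + int (j+1)) {j+1..N} x))"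
    then have ij: "i < Suc N" "j < Suc N" by auto
    show "mat (Suc N) (Suc N) (\<lambda>(j, k). hom (int (p (j + 1)) - int (j + 1) + int (k + 1)) {k + 1..Suc N} x) $$ (i, j) =
      mat (Suc N) (Suc N) (\<lambda>(i,j). \<Sum>m\<in>{int (i+1) - int (Suc N)..int (p (i+1))}.
      x (Suc N) ^ nat (int (p (i+1)) - m) * hom (m - int (i+1) + int (j+1)) {j+1..N} x) $$ (i, j)"
      using ij hom_expand_entry[of j N "int (p (i+1))" i x] by simp
  qed auto
  also have "\<dots> = (\<Sum>mu\<in>PiE {0..<Suc N} (\<lambda>i. {int (i+1) - int (Suc N)..int (p (i+1))}).
     (\<Prod>i\<in>{0..<Suc N}. x (Suc N) ^ nat (int (p (i+1)) - mu i)) * det (Gm N mu x))"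
    by (subst det_multilin) (auto simp: Gm_def)
  finally show ?thesis .
qed

definition Ib :: "nat \<Rightarrow> (nat \<Rightarrow> nat) \<Rightarrow> nat \<Rightarrow> int set" where
  "Ib N p i = {int (i+1) - int (Suc N)..int (p (i+1))}"

definition bad :: "nat \<Rightarrow> (nat \<Rightarrow> nat) \<Rightarrow> (nat \<Rightarrow> int) \<Rightarrow> nat \<Rightarrow> bool" where
  "bad N p mu i \<longleftrightarrow> i < N \<and> mu i < int (p (Suc (Suc i)))"

definition i0 :: "nat \<Rightarrow> (nat \<Rightarrow> nat) \<Rightarrow> (nat \<Rightarrow> int) \<Rightarrow> nat" where
  "i0 N p mu = (LEAST i. bad N p mu i)"

definition iota :: "nat \<Rightarrow> (nat \<Rightarrow> nat) \<Rightarrow> (nat \<Rightarrow> int) \<Rightarrow> nat \<Rightarrow> int" where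
  "iota N p mu = mu(i0 N p mu := mu (Suc (i0 N p mu)) - 1, Suc (i0 N p mu) := mu (i0 N p mu) + 1)"

lemma i0_props:
  assumes "\<exists>i. bad N p mu i"
  shows "bad N p mu (i0 N p mu)" "\<And>i. i < i0 N p mu \<Longrightarrow> \<not> bad N p mu i"
  using assms unfolding i0_def by (auto intro: LeastI_ex dest: not_less_Least)

lemma iota_at:
  "iota N p mu (i0 N p mu) = mu (Suc (i0 N p mu)) - 1"
  "iota N p mu (Suc (i0 N p mu)) = mu (i0 N p mu) + 1"
  "i \<noteq> i0 N p mu \<Longrightarrow> i \<noteq> Suc (i0 N p mu) \<Longrightarrow> iota N p mu i = mu i"
  unfolding iota_def by auto

lemma i0_iota:
  assumes b: "\<exists>i. bad N p mu i" and P: "mu \<in> PiE {0..<Suc N} (Ib N p)"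
  shows "i0 N p (iota N p mu) = i0 N p mu"
proof -
  let ?k = "i0 N p mu"
  have bk: "bad N p mu ?k" and nb: "\<And>i. i < ?k \<Longrightarrow> \<not> bad N p mu i" using i0_props[OF b] by auto
  have kN: "?k < N" using bk by (simp add: bad_def)
  have "mu (Suc ?k) \<le> int (p (Suc (Suc ?k)))" using P kN by (auto simp: PiE_iff Ib_def)
  then have "bad N p (iota N p mu) ?k" using kN by (simp add: bad_def iota_at)
  moreover have "\<And>i. i < ?k \<Longrightarrow> \<not> bad N p (iota N p mu) i"
    using nb by (simp add: bad_def iota_at)
  ultimately show ?thesis unfolding i0_def[of N p "iota N p mu"]
    by (intro Least_equality) (auto simp: not_less[symmetric] i0_def)
qed

lemma iota_bad:
  assumes b: "\<exists>i. bad N p mu i" and P: "mu \<in> PiE {0..<Suc N} (Ib N p)"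
  shows "\<exists>i. bad N p (iota N p mu) i"
proof -
  let ?k = "i0 N p mu"
  have bk: "bad N p mu ?k" using i0_props[OF b] by auto
  have kN: "?k < N" using bk by (simp add: bad_def)
  have "mu (Suc ?k) \<le> int (p (Suc (Suc ?k)))" using P kN by (auto simp: PiE_iff Ib_def)
  then have "bad N p (iota N p mu) ?k" using kN by (simp add: bad_def iota_at)
  then show ?thesis by blast
qed

lemma iota_iota:
  assumes b: "\<exists>i. bad N p mu i" and P: "mu \<in> PiE {0..<Suc N} (Ib N p)"
  shows "iota N p (iota N p mu) = mu"
  using i0_iota[OF b P] unfolding iota_def[of N p "iota N p mu"] by (auto simp: iota_at fun_eq_iff)

lemma iota_in:
  assumes b: "\<exists>i. bad N p mu i" and P: "mu \<in> PiE {0..<Suc N} (Ib N p)"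
    and mono: "\<And>j. j \<ge> 1 \<Longrightarrow> p (Suc j) \<le> p j"
  shows "iota N p mu \<in> PiE {0..<Suc N} (Ib N p)"
proof -
  let ?k = "i0 N p mu"
  have bk: "bad N p mu ?k" using i0_props[OF b] by auto
  have kN: "?k < N" using bk by (simp add: bad_def)
  have m1: "mu (Suc ?k) \<in> Ib N p (Suc ?k)" "mu ?k \<in> Ib N p ?k" using P kN by (auto simp: PiE_iff)
  have pm: "p (Suc (Suc ?k)) \<le> p (Suc ?k)" using mono[of "Suc ?k"] by simp
  show ?thesis
    unfolding PiE_iff
  proof (intro conjI ballI)
    fix i assume i: "i \<in> {0..<Suc N}"
    show "iota N p mu i \<in> Ib N p i"
    proof (cases "i = ?k")
      case True then show ?thesis using m1 pm by (auto simp: iota_at Ib_def)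
    next
      case False
      show ?thesis
      proof (cases "i = Suc ?k")
        case True then show ?thesis using m1 bk by (auto simp: iota_at Ib_def bad_def)
      next
        case False
        then show ?thesis using \<open>i \<noteq> ?k\<close> P i by (auto simp: iota_at PiE_iff)
      qed
    qed
  next
    show "iota N p mu \<in> extensional {0..<Suc N}"
      using P kN by (auto simp: iota_def extensional_def PiE_iff)
  qed
qed

lemma Gm_iota:
  assumes b: "\<exists>i. bad N p mu i"
  shows "Gm N (iota N p mu) x = swaprows (i0 N p mu) (Suc (i0 N p mu)) (Gm N mu x)"
proof -
  let ?k = "i0 N p mu"
  have kN: "?k < N" using i0_props(1)[OF b] by (simp add: bad_def)
  show ?thesis
  proof (rule eq_matI)
    fix i j assume i: "i < dim_row (swaprows ?k (Suc ?k) (Gm N mu x))" and j: "j < dim_col (swaprows ?k (Suc ?k) (Gm N mu x))"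
    then have ij: "i < Suc N" "j < Suc N" by (auto simp: Gm_def)
    show "Gm N (iota N p mu) x $$ (i, j) = swaprows ?k (Suc ?k) (Gm N mu x) $$ (i, j)"
      using ij kN by (auto simp: Gm_def iota_at algebra_simps)
  qed (auto simp: Gm_def)
qed

lemma det_iota:
  assumes b: "\<exists>i. bad N p mu i"
  shows "det (Gm N (iota N p mu) x) = - det (Gm N mu x)"
proof -
  let ?k = "i0 N p mu"
  have kN: "?k < N" using i0_props(1)[OF b] by (simp add: bad_def)
  show ?thesis unfolding Gm_iota[OF b]
    by (rule det_swaprows[of _ "Suc N"]) (use kN in \<open>auto simp: Gm_def\<close>)
qed

lemma det_fixed:
  assumes b: "\<exists>i. bad N p mu i" and fx: "iota N p mu = mu"
  shows "det (Gm N mu x) = 0"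
proof -
  let ?k = "i0 N p mu"
  have kN: "?k < N" using i0_props(1)[OF b] by (simp add: bad_def)
  have e: "mu (Suc ?k) - 1 = mu ?k" using iota_at(1)[of N p mu] fx by simp
  show ?thesis
  proof (rule det_identical_rows[of _ "Suc N" ?k "Suc ?k"])
    show "row (Gm N mu x) ?k = row (Gm N mu x) (Suc ?k)"
    proof (rule eq_vecI)
      fix j assume "j < dim_vec (row (Gm N mu x) (Suc ?k))"
      then have j: "j < Suc N" by (simp add: Gm_def)
      have "mu ?k - int (?k + 1) + int (j + 1) = mu (Suc ?k) - int (Suc ?k + 1) + int (j + 1)"
        using e by simp
      then show "row (Gm N mu x) ?k $ j = row (Gm N mu x) (Suc ?k) $ j"
        using j kN by (simp add: Gm_def row_def del: of_nat_add of_nat_Suc)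
    qed (simp add: Gm_def)
  qed (use kN in \<open>auto simp: Gm_def\<close>)
qed

lemma prod_swap2:
  assumes "finite A" "a \<in> A" "b \<in> A" "a \<noteq> b" "\<And>i. i \<in> A \<Longrightarrow> i \<noteq> a \<Longrightarrow> i \<noteq> b \<Longrightarrow> f i = g i"
    and "f a * f b = g a * (g b :: 'a::comm_monoid_mult)"
  shows "prod f A = prod g A"
proof -
  have "prod f A = f a * (f b * prod f (A - {a} - {b}))"
    using assms by (simp add: prod.remove[of A a] prod.remove[of "A - {a}" b])
  also have "prod f (A - {a} - {b}) = prod g (A - {a} - {b})"
    using assms by (intro prod.cong) auto
  also have "f a * (f b * prod g (A - {a} - {b})) = g a * (g b * prod g (A - {a} - {b}))"
    using assms(6) by (simp add: mult.assoc[symmetric])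
  also have "\<dots> = prod g A"
    using assms by (simp add: prod.remove[of A a] prod.remove[of "A - {a}" b])
  finally show ?thesis .
qed

definition wt :: "nat \<Rightarrow> (nat \<Rightarrow> nat) \<Rightarrow> (nat \<Rightarrow> 'a::comm_ring_1) \<Rightarrow> (nat \<Rightarrow> int) \<Rightarrow> 'a" where
  "wt N p x mu = (\<Prod>i\<in>{0..<Suc N}. x (Suc N) ^ nat (int (p (i+1)) - mu i))"

lemma wt_iota:
  assumes b: "\<exists>i. bad N p mu i" and P: "mu \<in> PiE {0..<Suc N} (Ib N p)"
    and mono: "\<And>j. j \<ge> 1 \<Longrightarrow> p (Suc j) \<le> p j"
  shows "wt N p x (iota N p mu) = wt N p x mu"
proof -
  let ?k = "i0 N p mu"
  have bk: "bad N p mu ?k" using i0_props[OF b] by auto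
  have kN: "?k < N" using bk by (simp add: bad_def)
  have m1: "mu (Suc ?k) \<in> Ib N p (Suc ?k)" "mu ?k \<in> Ib N p ?k" using P kN by (auto simp: PiE_iff)
  have pm: "p (Suc (Suc ?k)) \<le> p (Suc ?k)" using mono[of "Suc ?k"] by simp
  let ?y = "x (Suc N)"
  have "?y ^ nat (int (p (?k+1)) - iota N p mu ?k) * ?y ^ nat (int (p (Suc ?k+1)) - iota N p mu (Suc ?k))
      = ?y ^ nat (int (p (?k+1)) - mu ?k) * ?y ^ nat (int (p (Suc ?k+1)) - mu (Suc ?k))"
  proof -
    have "nat (int (p (?k+1)) - iota N p mu ?k) + nat (int (p (Suc ?k+1)) - iota N p mu (Suc ?k))
       = nat (int (p (?k+1)) - mu ?k) + nat (int (p (Suc ?k+1)) - mu (Suc ?k))"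
      using m1 bk pm by (auto simp: iota_at Ib_def bad_def)
    then show ?thesis by (simp add: power_add[symmetric])
  qed
  then show ?thesis unfolding wt_def
    by (intro prod_swap2[where a = ?k and b = "Suc ?k"]) (use kN in \<open>auto simp: iota_at\<close>)
qed

lemma bad_sum_zero:
  fixes x :: "nat \<Rightarrow> 'a::comm_ring_1"
  assumes mono: "\<And>j. j \<ge> 1 \<Longrightarrow> p (Suc j) \<le> p j"
  shows "(\<Sum>mu\<in>{mu \<in> PiE {0..<Suc N} (Ib N p). \<exists>i. bad N p mu i}. wt N p x mu * det (Gm N mu x)) = 0"
proof -
  let ?B = "{mu \<in> PiE {0..<Suc N} (Ib N p). \<exists>i. bad N p mu i}"
  let ?B' = "{mu \<in> ?B. iota N p mu \<noteq> mu}"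
  have fin: "finite ?B" by (rule finite_subset[of _ "PiE {0..<Suc N} (Ib N p)"]) (auto simp: Ib_def intro!: finite_PiE)
  have "(\<Sum>mu\<in>?B. wt N p x mu * det (Gm N mu x)) = (\<Sum>mu\<in>?B'. wt N p x mu * det (Gm N mu x))"
  proof (rule sum.mono_neutral_right)
    show "finite ?B" by (rule fin)
    show "?B' \<subseteq> ?B" by auto
    show "\<forall>mu\<in>?B - ?B'. wt N p x mu * det (Gm N mu x) = 0"
    proof
      fix mu assume "mu \<in> ?B - ?B'"
      then have "\<exists>i. bad N p mu i" "iota N p mu = mu" by auto
      then show "wt N p x mu * det (Gm N mu x) = 0" using det_fixed[of N p mu x] by simp
    qed
  qed
  also have "\<dots> = 0"
  proof (rule sum_involution_eq_0[where h = "iota N p"])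
    fix mu assume mu: "mu \<in> ?B'"
    then have b: "\<exists>i. bad N p mu i" and P: "mu \<in> PiE {0..<Suc N} (Ib N p)" by auto
    show "wt N p x (iota N p mu) * det (Gm N (iota N p mu) x) + wt N p x mu * det (Gm N mu x) = 0"
      using wt_iota[OF b P mono, where x=x] det_iota[OF b, where x=x] by simp
    show "iota N p mu \<in> ?B'"
      using iota_in[OF b P mono] iota_bad[OF b P] iota_iota[OF b P] mu by auto
    show "iota N p (iota N p mu) = mu" using iota_iota[OF b P] .
    show "iota N p mu \<noteq> mu" using mu by auto
  qed
  finally show ?thesis .
qed

lemma det_last:
  fixes x :: "nat \<Rightarrow> 'a::comm_ring_1"
  shows "det (mat (Suc N) (Suc N) (\<lambda>(i,c). hom (int (q (i+1)) - int (i+1) + int (c+1)) {c+1..N} x))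
    = (if q (Suc N) = 0 then Dt N q x else 0)"
proof -
  let ?A = "mat (Suc N) (Suc N) (\<lambda>(i,c). hom (int (q (i+1)) - int (i+1) + int (c+1)) {c+1..N} x)"
  have A: "?A \<in> carrier_mat (Suc N) (Suc N)" by simp
  have col: "\<And>i. i < Suc N \<Longrightarrow> ?A $$ (i, N) = (if i = N \<and> q (Suc N) = 0 then 1 else 0)"
    by (case_tac "i = N") (auto simp: hom_empty)
  have "det ?A = (\<Sum>i<Suc N. ?A $$ (i, N) * cofactor ?A i N)"
    by (rule laplace_expansion_column[OF A]) simp
  also have "\<dots> = (\<Sum>i<Suc N. (if i = N \<and> q (Suc N) = 0 then cofactor ?A N N else 0))"
  proof (intro sum.cong refl)
    fix i assume "i \<in> {..<Suc N}"
    then have i: "i < Suc N" by simp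
    show "?A $$ (i, N) * cofactor ?A i N = (if i = N \<and> q (Suc N) = 0 then cofactor ?A N N else 0)"
      by (simp only: col[OF i]) auto
  qed
  also have "\<dots> = (if q (Suc N) = 0 then cofactor ?A N N else 0)"
    by (cases "q (Suc N) = 0") (simp_all add: sum.delta)
  also have "cofactor ?A N N = Dt N q x"
  proof -
    have "mat_delete ?A N N = mat N N (\<lambda>(j, k). hom (int (q (j + 1)) - int (j + 1) + int (k + 1)) {k + 1..N} x)"
      by (rule eq_matI) (auto simp: mat_delete_def)
    then show ?thesis unfolding cofactor_def Dt_def by (simp add: mult_2[symmetric] power_mult)
  qed
  finally show ?thesis .
qed

definition Interlace :: "nat \<Rightarrow> (nat \<Rightarrow> nat) \<Rightarrow> (nat \<Rightarrow> nat) set" where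
  "Interlace N p = {q. q 0 = 0 \<and> (\<forall>j>Suc N. q j = 0) \<and> (\<forall>j\<in>{1..Suc N}. p (Suc j) \<le> q j \<and> q j \<le> p j)}"

lemma good_sum:
  fixes x :: "nat \<Rightarrow> 'a::comm_ring_1"
  assumes mono: "\<And>j. j \<ge> 1 \<Longrightarrow> p (Suc j) \<le> p j"
    and supp: "\<And>j. j > Suc N \<Longrightarrow> p j = 0"
  shows "(\<Sum>q\<in>Interlace N p. x (Suc N) ^ (\<Sum>i\<in>{0..<Suc N}. p (i+1) - q (i+1)) * (if q (Suc N) = 0 then Dt N q x else 0))
    = (\<Sum>mu\<in>{mu \<in> PiE {0..<Suc N} (Ib N p). \<not> (\<exists>i. bad N p mu i)}. wt N p x mu * det (Gm N mu x))"
proof (rule sum.reindex_bij_witness[where j = "\<lambda>q. restrict (\<lambda>i. int (q (Suc i))) {0..<Suc N}"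
      and i = "\<lambda>mu j. if 1 \<le> j \<and> j \<le> Suc N then nat (mu (j - 1)) else 0"])
  fix mu assume mu: "mu \<in> {mu \<in> PiE {0..<Suc N} (Ib N p). \<not> (\<exists>i. bad N p mu i)}"
  then have P: "mu \<in> PiE {0..<Suc N} (Ib N p)" and nb: "\<And>i. \<not> bad N p mu i" by auto
  have nn: "\<And>i. i < Suc N \<Longrightarrow> mu i \<ge> 0"
  proof -
    fix i assume i: "i < Suc N"
    show "mu i \<ge> 0"
    proof (cases "i < N")
      case True then show ?thesis using nb[of i] by (simp add: bad_def)
    next
      case False then have "i = N" using i by simp
      moreover have "mu N \<in> Ib N p N" using P by (auto simp: PiE_iff)
      ultimately show ?thesis by (simp add: Ib_def)
    qed
  qed
  show "restrict (\<lambda>i. int ((\<lambda>j. if 1 \<le> j \<and> j \<le> Suc N then nat (mu (j - 1)) else 0) (Suc i))) {0..<Suc N} = mu"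
    using P nn by (auto simp: fun_eq_iff PiE_iff extensional_def)
  show "(\<lambda>j. if 1 \<le> j \<and> j \<le> Suc N then nat (mu (j - 1)) else 0) \<in> Interlace N p"
    unfolding Interlace_def
  proof (intro CollectI conjI allI impI ballI)
    fix j assume j: "j \<in> {1..Suc N}"
    have r: "mu (j - 1) \<in> Ib N p (j - 1)" using P j by (auto simp: PiE_iff)
    have "\<not> bad N p mu (j - 1)" by (rule nb)
    then show "p (Suc j) \<le> (if 1 \<le> j \<and> j \<le> Suc N then nat (mu (j - 1)) else 0)"
      using j nn[of "j - 1"] supp[of "Suc (Suc N)"] by (cases "j = Suc N") (auto simp: bad_def)
    show "(if 1 \<le> j \<and> j \<le> Suc N then nat (mu (j - 1)) else 0) \<le> p j"
      using j r by (auto simp: Ib_def)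
  qed auto
next
  fix q assume q: "q \<in> Interlace N p"
  then have q0: "q 0 = 0" and qs: "\<And>j. j > Suc N \<Longrightarrow> q j = 0"
    and qi: "\<And>j. j \<in> {1..Suc N} \<Longrightarrow> p (Suc j) \<le> q j \<and> q j \<le> p j"
    by (auto simp: Interlace_def)
  show "(\<lambda>j. if 1 \<le> j \<and> j \<le> Suc N then nat (restrict (\<lambda>i. int (q (Suc i))) {0..<Suc N} (j - 1)) else 0) = q"
    using q0 qs by (auto simp: fun_eq_iff not_le)
  show "restrict (\<lambda>i. int (q (Suc i))) {0..<Suc N} \<in> {mu \<in> PiE {0..<Suc N} (Ib N p). \<not> (\<exists>i. bad N p mu i)}"
  proof (intro CollectI conjI)
    show "restrict (\<lambda>i. int (q (Suc i))) {0..<Suc N} \<in> PiE {0..<Suc N} (Ib N p)"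
      using qi by (auto simp: PiE_iff Ib_def)
    show "\<not> (\<exists>i. bad N p (restrict (\<lambda>i. int (q (Suc i))) {0..<Suc N}) i)"
    proof
      assume "\<exists>i. bad N p (restrict (\<lambda>i. int (q (Suc i))) {0..<Suc N}) i"
      then obtain i where "i < N" "q (Suc i) < p (Suc (Suc i))" by (auto simp: bad_def)
      then show False using qi[of "Suc i"] by auto
    qed
  qed
  have G: "Gm N (restrict (\<lambda>i. int (q (Suc i))) {0..<Suc N}) x =
      mat (Suc N) (Suc N) (\<lambda>(i,c). hom (int (q (i+1)) - int (i+1) + int (c+1)) {c+1..N} x)"
    by (rule eq_matI) (auto simp: Gm_def)
  have W: "wt N p x (restrict (\<lambda>i. int (q (Suc i))) {0..<Suc N}) = x (Suc N) ^ (\<Sum>i\<in>{0..<Suc N}. p (i+1) - q (i+1))"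
    unfolding wt_def power_sum using qi by (intro prod.cong refl) (auto simp: nat_diff_distrib)
  show "wt N p x (restrict (\<lambda>i. int (q (Suc i))) {0..<Suc N}) * det (Gm N (restrict (\<lambda>i. int (q (Suc i))) {0..<Suc N}) x)
     = x (Suc N) ^ (\<Sum>i\<in>{0..<Suc N}. p (i+1) - q (i+1)) * (if q (Suc N) = 0 then Dt N q x else 0)"
    unfolding G W det_last ..
qed

lemma det_side:
  fixes x :: "nat \<Rightarrow> 'a::comm_ring_1"
  assumes mono: "\<And>j. j \<ge> 1 \<Longrightarrow> p (Suc j) \<le> p j"
    and supp: "\<And>j. j > Suc N \<Longrightarrow> p j = 0"
  shows "Dt (Suc N) p x = (\<Sum>q\<in>Interlace N p. x (Suc N) ^ (\<Sum>i\<in>{0..<Suc N}. p (i+1) - q (i+1)) * (if q (Suc N) = 0 then Dt N q x else 0))"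
proof -
  let ?P = "PiE {0..<Suc N} (Ib N p)"
  let ?G = "{mu \<in> ?P. \<not> (\<exists>i. bad N p mu i)}"
  let ?B = "{mu \<in> ?P. \<exists>i. bad N p mu i}"
  let ?f = "\<lambda>mu. wt N p x mu * det (Gm N mu x)"
  have fin: "finite ?P" by (auto simp: Ib_def intro!: finite_PiE)
  have "Dt (Suc N) p x = sum ?f ?P"
    unfolding det_expand wt_def Ib_def ..
  also have "?P = ?G \<union> ?B" by auto
  also have "sum ?f (?G \<union> ?B) = sum ?f ?G + sum ?f ?B"
    by (rule sum.union_disjoint) (use fin in auto)
  also have "sum ?f ?B = 0" by (rule bad_sum_zero[of p, OF mono])
  finally show ?thesis using good_sum[of p N, OF mono supp, of x] by simp
qed

definition cellsP :: "(nat \<Rightarrow> nat) \<Rightarrow> (nat \<times> nat) set" where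
  "cellsP p = {(i, j). 1 \<le> i \<and> 1 \<le> j \<and> j \<le> p i}"

definition ssytP :: "(nat \<Rightarrow> nat) \<Rightarrow> nat \<Rightarrow> (nat \<times> nat \<Rightarrow> nat) set" where
  "ssytP p N = {T.
     (\<forall>c. c \<notin> cellsP p \<longrightarrow> T c = 0) \<and>
     (\<forall>c\<in>cellsP p. T c \<in> {1..N}) \<and>
     (\<forall>i j. (i, j) \<in> cellsP p \<and> (i, Suc j) \<in> cellsP p \<longrightarrow> T (i, j) \<le> T (i, Suc j)) \<and>
     (\<forall>i j. (i, j) \<in> cellsP p \<and> (Suc i, j) \<in> cellsP p \<longrightarrow> T (i, j) < T (Suc i, j))}"

definition schurP :: "(nat \<Rightarrow> nat) \<Rightarrow> nat \<Rightarrow> (nat \<Rightarrow> 'a::comm_ring_1) \<Rightarrow> 'a" where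
  "schurP p N x = (\<Sum>T\<in>ssytP p N. \<Prod>c\<in>cellsP p. x (T c))"

lemma cellsP_Sigma:
  assumes "\<And>j. j > B \<Longrightarrow> p j = 0"
  shows "cellsP p = Sigma {1..B} (\<lambda>i. {1..p i})"
  using assms unfolding cellsP_def by (auto simp: not_le[symmetric]) (metis le_zero_eq not_less_eq_eq numeral_1_eq_Suc_0 numerals(1))

lemma finite_cellsP:
  assumes "\<And>j. j > B \<Longrightarrow> p j = 0"
  shows "finite (cellsP p)"
  using cellsP_Sigma[of B p] assms by simp

lemma finite_ssytP:
  assumes "finite (cellsP p)"
  shows "finite (ssytP p N)"
proof (rule finite_subset[OF _ finite_set_of_finite_funs[OF assms, of "{1..N}" 0]])
  show "ssytP p N \<subseteq> {f. \<forall>x. (x \<in> cellsP p \<longrightarrow> f x \<in> {1..N}) \<and> (x \<notin> cellsP p \<longrightarrow> f x = 0)}"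
    unfolding ssytP_def by blast
qed simp

lemma row_mono:
  assumes T: "T \<in> ssytP p N" and c: "(i, c) \<in> cellsP p" and c': "(i, c + k) \<in> cellsP p"
  shows "T (i, c) \<le> T (i, c + k)"
  using c'
proof (induction k)
  case 0 then show ?case by simp
next
  case (Suc k)
  have "(i, c + k) \<in> cellsP p" using Suc.prems c by (auto simp: cellsP_def)
  then have "T (i, c) \<le> T (i, c + k)" by (rule Suc.IH)
  also have "T (i, c + k) \<le> T (i, Suc (c + k))"
    using T \<open>(i, c + k) \<in> cellsP p\<close> Suc.prems unfolding ssytP_def by auto
  finally show ?case by simp
qed

lemma entry_ge_row:
  assumes mono: "\<And>j. j \<ge> 1 \<Longrightarrow> p (Suc j) \<le> p j"
    and T: "T \<in> ssytP p N"
  shows "(i, c) \<in> cellsP p \<Longrightarrow> i \<le> T (i, c)"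
proof (induction i)
  case 0 then show ?case by simp
next
  case (Suc i)
  show ?case
  proof (cases "i = 0")
    case True then show ?thesis using T Suc.prems unfolding ssytP_def by auto
  next
    case False
    then have ic: "(i, c) \<in> cellsP p" using Suc.prems mono[of i] by (auto simp: cellsP_def)
    then have "i \<le> T (i, c)" by (rule Suc.IH)
    also have "T (i, c) < T (Suc i, c)" using T ic Suc.prems unfolding ssytP_def by auto
    finally show ?thesis by simp
  qed
qed

lemma downclosed_interval:
  fixes S :: "nat set"
  assumes "S \<subseteq> {1..n}" and dc: "\<And>c c'. c' \<in> S \<Longrightarrow> 1 \<le> c \<Longrightarrow> c \<le> c' \<Longrightarrow> c \<in> S"
  shows "S = {1..card S}"
proof (cases "S = {}")
  case True then show ?thesis by simp
next
  case False
  have fin: "finite S" using assms(1) finite_subset by blast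
  define m where "m = Max S"
  have e: "S = {1..m}"
  proof
    show "S \<subseteq> {1..m}" using assms(1) fin by (auto simp: m_def)
    show "{1..m} \<subseteq> S" using dc[of m] Max_in[OF fin False] by (auto simp: m_def)
  qed
  then show ?thesis by simp
qed

definition qT :: "(nat \<Rightarrow> nat) \<Rightarrow> nat \<Rightarrow> (nat \<times> nat \<Rightarrow> nat) \<Rightarrow> nat \<Rightarrow> nat" where
  "qT p N T i = (if i = 0 then 0 else card {c\<in>{1..p i}. T (i, c) < Suc N})"

lemma qT_set:
  assumes T: "T \<in> ssytP p (Suc N)" and i: "i \<ge> 1"
  shows "{c\<in>{1..p i}. T (i, c) < Suc N} = {1..qT p N T i}"
proof -
  have "{c\<in>{1..p i}. T (i, c) < Suc N} = {1..card {c\<in>{1..p i}. T (i, c) < Suc N}}"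
  proof (rule downclosed_interval[of _ "p i"])
    fix c c' assume c': "c' \<in> {c\<in>{1..p i}. T (i, c) < Suc N}" and c: "1 \<le> c" "c \<le> c'"
    have "T (i, c) \<le> T (i, c + (c' - c))"
      by (rule row_mono[OF T]) (use c c' i in \<open>auto simp: cellsP_def\<close>)
    then show "c \<in> {c\<in>{1..p i}. T (i, c) < Suc N}" using c c' by auto
  qed auto
  then show ?thesis using i by (simp add: qT_def)
qed

lemma qT_iff:
  assumes T: "T \<in> ssytP p (Suc N)" and i: "i \<ge> 1" and c: "1 \<le> c" "c \<le> p i"
  shows "T (i, c) < Suc N \<longleftrightarrow> c \<le> qT p N T i"
  using qT_set[OF T i] c by (auto simp: set_eq_iff)

lemma Interlace_props:
  assumes q: "q \<in> Interlace N p" and supp: "\<And>j. j > Suc N \<Longrightarrow> p j = 0"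
  shows "q 0 = 0" "\<And>j. j \<ge> 1 \<Longrightarrow> p (Suc j) \<le> q j" "\<And>j. j \<ge> 1 \<Longrightarrow> q j \<le> p j"
    "\<And>j. j > Suc N \<Longrightarrow> q j = 0"
proof -
  show "q 0 = 0" using q by (simp add: Interlace_def)
  show "\<And>j. j > Suc N \<Longrightarrow> q j = 0" using q by (simp add: Interlace_def)
  fix j :: nat assume j: "j \<ge> 1"
  show "p (Suc j) \<le> q j"
  proof (cases "j \<le> Suc N")
    case True then show ?thesis using q j by (auto simp: Interlace_def)
  next
    case False then show ?thesis using supp[of "Suc j"] by simp
  qed
  show "q j \<le> p j"
  proof (cases "j \<le> Suc N")
    case True then show ?thesis using q j by (auto simp: Interlace_def)
  next
    case False then show ?thesis using q by (simp add: Interlace_def)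
  qed
qed

lemma qT_in:
  assumes mono: "\<And>j. j \<ge> 1 \<Longrightarrow> p (Suc j) \<le> p j"
    and supp: "\<And>j. j > Suc N \<Longrightarrow> p j = 0"
    and T: "T \<in> ssytP p (Suc N)"
  shows "qT p N T \<in> Interlace N p"
  unfolding Interlace_def
proof (intro CollectI conjI allI impI ballI)
  show "qT p N T 0 = 0" by (simp add: qT_def)
  fix j
  assume "Suc N < j" then show "qT p N T j = 0" using supp[of j] by (simp add: qT_def)
next
  fix j assume j: "j \<in> {1..Suc N}"
  have "card {c\<in>{1..p j}. T (j, c) < Suc N} \<le> card {1..p j}" by (rule card_mono) auto
  then show "qT p N T j \<le> p j" using j by (simp add: qT_def)
  have "{1..p (Suc j)} \<subseteq> {c\<in>{1..p j}. T (j, c) < Suc N}"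
  proof
    fix c assume c: "c \<in> {1..p (Suc j)}"
    have pj: "p (Suc j) \<le> p j" using mono j by auto
    have "T (j, c) < T (Suc j, c)" using T c j pj unfolding ssytP_def cellsP_def by auto
    also have "T (Suc j, c) \<le> Suc N" using T c j unfolding ssytP_def cellsP_def by auto
    finally show "c \<in> {c\<in>{1..p j}. T (j, c) < Suc N}" using c pj by auto
  qed
  then have "card {1..p (Suc j)} \<le> card {c\<in>{1..p j}. T (j, c) < Suc N}" by (rule card_mono[rotated]) auto
  then show "p (Suc j) \<le> qT p N T j" using j by (simp add: qT_def)
qed

lemma fiber:
  fixes x :: "nat \<Rightarrow> 'a::comm_ring_1"
  assumes mono: "\<And>j. j \<ge> 1 \<Longrightarrow> p (Suc j) \<le> p j"
    and supp: "\<And>j. j > Suc N \<Longrightarrow> p j = 0"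
    and q: "q \<in> Interlace N p"
  shows "(\<Sum>T'\<in>ssytP q N. x (Suc N) ^ card (cellsP p - cellsP q) * (\<Prod>c\<in>cellsP q. x (T' c)))
       = (\<Sum>T\<in>{T\<in>ssytP p (Suc N). qT p N T = q}. \<Prod>c\<in>cellsP p. x (T c))"
proof -
  note qp = Interlace_props[OF q supp]
  let ?C = "cellsP p" and ?D = "cellsP q"
  have DC: "?D \<subseteq> ?C"
  proof
    fix c assume "c \<in> ?D"
    then obtain i j where c: "c = (i, j)" "1 \<le> i" "1 \<le> j" "j \<le> q i" by (auto simp: cellsP_def)
    then have "j \<le> p i" using qp(3)[of i] by linarith
    then show "c \<in> ?C" using c by (auto simp: cellsP_def)
  qed
  have finC: "finite ?C" by (rule finite_cellsP[of "Suc N" p, OF supp])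
  define ext where "ext = (\<lambda>T' c. if c \<in> ?D then T' c else if c \<in> ?C then Suc N else (0::nat))"
  define res where "res = (\<lambda>T (c::nat \<times> nat). if c \<in> ?D then T c else (0::nat))"
  show ?thesis
  proof (rule sum.reindex_bij_witness[where j = ext and i = res])
    fix T' assume T': "T' \<in> ssytP q N"
    then have z: "\<And>c. c \<notin> ?D \<Longrightarrow> T' c = 0" and v: "\<And>c. c \<in> ?D \<Longrightarrow> T' c \<in> {1..N}"
      and r: "\<And>i j. (i, j) \<in> ?D \<Longrightarrow> (i, Suc j) \<in> ?D \<Longrightarrow> T' (i, j) \<le> T' (i, Suc j)"
      and cl: "\<And>i j. (i, j) \<in> ?D \<Longrightarrow> (Suc i, j) \<in> ?D \<Longrightarrow> T' (i, j) < T' (Suc i, j)"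
      unfolding ssytP_def by auto
    show "res (ext T') = T'" using z by (auto simp: res_def ext_def fun_eq_iff)
    have E: "ext T' \<in> ssytP p (Suc N)"
      unfolding ssytP_def
    proof (intro CollectI conjI allI impI ballI)
      fix c assume "c \<notin> ?C" then show "ext T' c = 0" using DC by (auto simp: ext_def)
    next
      fix c assume "c \<in> ?C" then show "ext T' c \<in> {1..Suc N}" using v[of c] by (auto simp: ext_def)
    next
      fix i j assume a: "(i, j) \<in> ?C \<and> (i, Suc j) \<in> ?C"
      show "ext T' (i, j) \<le> ext T' (i, Suc j)"
      proof (cases "(i, Suc j) \<in> ?D")
        case True
        then have "(i, j) \<in> ?D" using a by (auto simp: cellsP_def)
        then show ?thesis using True r v by (auto simp: ext_def)
      next
        case False then show ?thesis using a v[of "(i, j)"] by (auto simp: ext_def)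
      qed
    next
      fix i j assume a: "(i, j) \<in> ?C \<and> (Suc i, j) \<in> ?C"
      then have "(i, j) \<in> ?D" using qp(2)[of i] by (auto simp: cellsP_def)
      then show "ext T' (i, j) < ext T' (Suc i, j)"
        using a cl v[of "(i, j)"] by (cases "(Suc i, j) \<in> ?D") (auto simp: ext_def)
    qed
    have "qT p N (ext T') = q"
    proof
      fix i show "qT p N (ext T') i = q i"
      proof (cases "i = 0")
        case True then show ?thesis using qp(1) by (simp add: qT_def)
      next
        case False
        have "{c\<in>{1..p i}. ext T' (i, c) < Suc N} = {1..q i}"
        proof (rule equalityI; rule subsetI)
          fix c assume c: "c \<in> {c\<in>{1..p i}. ext T' (i, c) < Suc N}"
          then have "(i, c) \<in> ?C" using False by (auto simp: cellsP_def)
          then have "(i, c) \<in> ?D" using c by (auto simp: ext_def split: if_splits)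
          then show "c \<in> {1..q i}" by (auto simp: cellsP_def)
        next
          fix c assume c: "c \<in> {1..q i}"
          then have cD: "(i, c) \<in> ?D" using False by (auto simp: cellsP_def)
          then have "T' (i, c) \<le> N" using v[OF cD] by simp
          then show "c \<in> {c\<in>{1..p i}. ext T' (i, c) < Suc N}"
            using cD c qp(3)[of i] False by (auto simp: ext_def)
        qed
        then show ?thesis using False by (simp add: qT_def)
      qed
    qed
    then show "ext T' \<in> {T\<in>ssytP p (Suc N). qT p N T = q}" using E by simp
    have "(\<Prod>c\<in>?C. x (ext T' c)) = (\<Prod>c\<in>?C - ?D. x (ext T' c)) * (\<Prod>c\<in>?D. x (ext T' c))"
      by (rule prod.subset_diff[OF DC finC])
    also have "(\<Prod>c\<in>?C - ?D. x (ext T' c)) = (\<Prod>c\<in>?C - ?D. x (Suc N))"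
      by (rule prod.cong) (auto simp: ext_def)
    also have "(\<Prod>c\<in>?D. x (ext T' c)) = (\<Prod>c\<in>?D. x (T' c))"
      by (rule prod.cong) (auto simp: ext_def)
    finally show "(\<Prod>c\<in>?C. x (ext T' c)) = x (Suc N) ^ card (?C - ?D) * (\<Prod>c\<in>?D. x (T' c))"
      by simp
  next
    fix T assume TT: "T \<in> {T\<in>ssytP p (Suc N). qT p N T = q}"
    then have T: "T \<in> ssytP p (Suc N)" and qTq: "qT p N T = q" by auto
    from T have z: "\<And>c. c \<notin> ?C \<Longrightarrow> T c = 0" and v: "\<And>c. c \<in> ?C \<Longrightarrow> T c \<in> {1..Suc N}"
      and r: "\<And>i j. (i, j) \<in> ?C \<Longrightarrow> (i, Suc j) \<in> ?C \<Longrightarrow> T (i, j) \<le> T (i, Suc j)"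
      and cl: "\<And>i j. (i, j) \<in> ?C \<Longrightarrow> (Suc i, j) \<in> ?C \<Longrightarrow> T (i, j) < T (Suc i, j)"
      unfolding ssytP_def by auto
    have iff: "\<And>i j. (i, j) \<in> ?C \<Longrightarrow> T (i, j) < Suc N \<longleftrightarrow> (i, j) \<in> ?D"
    proof -
      fix i j assume ij: "(i, j) \<in> ?C"
      then have "T (i, j) < Suc N \<longleftrightarrow> j \<le> qT p N T i" by (intro qT_iff[OF T]) (auto simp: cellsP_def)
      then show "T (i, j) < Suc N \<longleftrightarrow> (i, j) \<in> ?D" using ij qTq by (auto simp: cellsP_def)
    qed
    show "ext (res T) = T"
    proof
      fix c show "ext (res T) c = T c"
      proof (cases "c \<in> ?D")
        case True then show ?thesis by (simp add: ext_def res_def)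
      next
        case False
        show ?thesis
        proof (cases "c \<in> ?C")
          case True
          obtain i j where c: "c = (i, j)" by fastforce
          have "T c = Suc N" using iff[of i j] v[of c] True False c by auto
          then show ?thesis using True False by (simp add: ext_def res_def)
        next
          case False then show ?thesis using z \<open>c \<notin> ?D\<close> by (simp add: ext_def res_def)
        qed
      qed
    qed
    show "res T \<in> ssytP q N"
      unfolding ssytP_def
    proof (intro CollectI conjI allI impI ballI)
      fix c assume "c \<notin> ?D" then show "res T c = 0" by (simp add: res_def)
    next
      fix c assume cD: "c \<in> ?D"
      obtain i j where c: "c = (i, j)" by fastforce
      have "c \<in> ?C" using cD DC by auto
      then show "res T c \<in> {1..N}" using iff[of i j] v[of c] cD c by (auto simp: res_def)
    next
      fix i j assume a: "(i, j) \<in> ?D \<and> (i, Suc j) \<in> ?D"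
      then show "res T (i, j) \<le> res T (i, Suc j)" using r DC by (auto simp: res_def)
    next
      fix i j assume a: "(i, j) \<in> ?D \<and> (Suc i, j) \<in> ?D"
      then show "res T (i, j) < res T (Suc i, j)" using cl DC by (auto simp: res_def)
    qed
  qed
qed

lemma finite_Interlace: "finite (Interlace N p)"
proof (rule finite_subset[OF _ finite_set_of_finite_funs[of "{0..Suc N}" "{0..Max (p ` {0..Suc N})}" 0]])
  show "Interlace N p \<subseteq> {f. \<forall>x. (x \<in> {0..Suc N} \<longrightarrow> f x \<in> {0..Max (p ` {0..Suc N})}) \<and> (x \<notin> {0..Suc N} \<longrightarrow> f x = 0)}"
  proof (intro subsetI CollectI allI conjI impI)
    fix q x assume q: "q \<in> Interlace N p"
    assume x: "x \<in> {0..Suc N}"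
    show "q x \<in> {0..Max (p ` {0..Suc N})}"
    proof (cases "x = 0")
      case True then show ?thesis using q by (simp add: Interlace_def)
    next
      case False
      then have "q x \<le> p x" using q x by (auto simp: Interlace_def)
      also have "p x \<le> Max (p ` {0..Suc N})" using x by (intro Max_ge) auto
      finally show ?thesis by simp
    qed
  next
    fix q x assume "q \<in> Interlace N p" "x \<notin> {0..Suc N}"
    then show "q x = 0" by (auto simp: Interlace_def)
  qed
qed auto

lemma branching:
  fixes x :: "nat \<Rightarrow> 'a::comm_ring_1"
  assumes mono: "\<And>j. j \<ge> 1 \<Longrightarrow> p (Suc j) \<le> p j"
    and supp: "\<And>j. j > Suc N \<Longrightarrow> p j = 0"
  shows "schurP p (Suc N) x = (\<Sum>q\<in>Interlace N p. x (Suc N) ^ card (cellsP p - cellsP q) * schurP q N x)"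
proof -
  have fin: "finite (ssytP p (Suc N))" by (rule finite_ssytP[OF finite_cellsP[of "Suc N" p, OF supp]])
  have "schurP p (Suc N) x = (\<Sum>q\<in>Interlace N p. \<Sum>T\<in>{T\<in>ssytP p (Suc N). qT p N T = q}. \<Prod>c\<in>cellsP p. x (T c))"
    unfolding schurP_def
    by (rule sum.group[symmetric, OF fin finite_Interlace]) (use qT_in[of p N, OF mono supp] in auto)
  also have "\<dots> = (\<Sum>q\<in>Interlace N p. x (Suc N) ^ card (cellsP p - cellsP q) * schurP q N x)"
    by (intro sum.cong refl) (simp add: fiber[of p N, OF mono supp, symmetric] schurP_def sum_distrib_left)
  finally show ?thesis .
qed

lemma card_diff_cells:
  assumes supp: "\<And>j. j > Suc N \<Longrightarrow> p j = 0" and q: "q \<in> Interlace N p"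
  shows "card (cellsP p - cellsP q) = (\<Sum>i\<in>{0..<Suc N}. p (i+1) - q (i+1))"
proof -
  note qp = Interlace_props[OF q supp]
  have Cp: "cellsP p = Sigma {1..Suc N} (\<lambda>i. {1..p i})" by (rule cellsP_Sigma[OF supp])
  have Cq: "cellsP q = Sigma {1..Suc N} (\<lambda>i. {1..q i})" by (rule cellsP_Sigma) (use qp(4) in auto)
  have sub: "cellsP q \<subseteq> cellsP p"
  proof
    fix c assume "c \<in> cellsP q"
    then obtain i j where c: "c = (i, j)" "1 \<le> i" "1 \<le> j" "j \<le> q i" by (auto simp: cellsP_def)
    then have "j \<le> p i" using qp(3)[of i] by linarith
    then show "c \<in> cellsP p" using c by (auto simp: cellsP_def)
  qed
  have "card (cellsP p - cellsP q) = card (cellsP p) - card (cellsP q)"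
    by (rule card_Diff_subset) (use sub finite_cellsP[of "Suc N" p, OF supp] finite_subset in auto)
  also have "\<dots> = (\<Sum>i\<in>{1..Suc N}. p i) - (\<Sum>i\<in>{1..Suc N}. q i)"
    unfolding Cp Cq by (simp add: card_SigmaI)
  also have "\<dots> = (\<Sum>i\<in>{1..Suc N}. p i - q i)"
    by (rule sum_subtractf_nat[symmetric]) (use qp(3) in auto)
  also have "\<dots> = (\<Sum>i\<in>{0..<Suc N}. p (i+1) - q (i+1))"
    by (rule sum.reindex_bij_witness[where j = "\<lambda>i. i - 1" and i = "\<lambda>i. i + 1"]) auto
  finally show ?thesis .
qed

lemma Dt_zero: "Dt 0 p x = 1"
  unfolding Dt_def by (simp add: det_def)

lemma main:
  fixes x :: "nat \<Rightarrow> 'a::comm_ring_1"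
  shows "\<forall>p. (\<forall>j\<ge>1. p (Suc j) \<le> p j) \<longrightarrow> (\<forall>j>N. p j = 0) \<longrightarrow> schurP p N x = Dt N p x"
proof (induction N)
  case 0
  show ?case
  proof (intro allI impI)
    fix p :: "nat \<Rightarrow> nat" assume "\<forall>j>0. p j = 0"
    then have C: "cellsP p = {}" by (auto simp: cellsP_def)
    have "ssytP p 0 = {\<lambda>_. 0}" unfolding ssytP_def C by auto
    then show "schurP p 0 x = Dt 0 p x" by (simp add: schurP_def Dt_zero C)
  qed
next
  case (Suc N)
  show ?case
  proof (intro allI impI)
  fix p :: "nat \<Rightarrow> nat" assume mono0: "\<forall>j\<ge>1. p (Suc j) \<le> p j" and supp0: "\<forall>j>Suc N. p j = 0"
  have mono: "\<And>j. j \<ge> 1 \<Longrightarrow> p (Suc j) \<le> p j" using mono0 by auto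
  have supp: "\<And>j. j > Suc N \<Longrightarrow> p j = 0" using supp0 by auto
  have "schurP p (Suc N) x = (\<Sum>q\<in>Interlace N p. x (Suc N) ^ card (cellsP p - cellsP q) * schurP q N x)"
    by (rule branching[of p N, OF mono supp])
  also have "\<dots> = (\<Sum>q\<in>Interlace N p. x (Suc N) ^ (\<Sum>i\<in>{0..<Suc N}. p (i+1) - q (i+1)) * (if q (Suc N) = 0 then Dt N q x else 0))"
  proof (intro sum.cong refl)
    fix q assume q: "q \<in> Interlace N p"
    have qp2: "\<And>j. j \<ge> 1 \<Longrightarrow> p (Suc j) \<le> q j" using Interlace_props(2)[of q N p] q supp by blast
    have qp3: "\<And>j. j \<ge> 1 \<Longrightarrow> q j \<le> p j" using Interlace_props(3)[of q N p] q supp by blast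
    have qp4: "\<And>j. j > Suc N \<Longrightarrow> q j = 0" using Interlace_props(4)[of q N p] q supp by blast
    have monoq: "\<And>j. j \<ge> 1 \<Longrightarrow> q (Suc j) \<le> q j"
    proof -
      fix j :: nat assume j: "j \<ge> 1"
      have "q (Suc j) \<le> p (Suc j)" using qp3[of "Suc j"] by simp
      also have "\<dots> \<le> q j" using qp2[OF j] .
      finally show "q (Suc j) \<le> q j" .
    qed
    have "schurP q N x = (if q (Suc N) = 0 then Dt N q x else 0)"
    proof (cases "q (Suc N) = 0")
      case True
      have "schurP q N x = Dt N q x"
      proof -
        have h1: "\<forall>j\<ge>1. q (Suc j) \<le> q j" using monoq by auto
        have h2: "\<forall>j>N. q j = 0"
        proof (intro allI impI)
          fix j assume "j > N"
          then show "q j = 0" using True qp4[of j] by (cases "j = Suc N") auto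
        qed
        show ?thesis using Suc.IH h1 h2 by blast
      qed
      then show ?thesis using True by simp
    next
      case False
      have "ssytP q N = {}"
      proof (rule ccontr)
        assume "ssytP q N \<noteq> {}"
        then obtain T where T: "T \<in> ssytP q N" by blast
        have c: "(Suc N, 1) \<in> cellsP q" using False by (auto simp: cellsP_def)
        have "Suc N \<le> T (Suc N, 1)" by (rule entry_ge_row[OF monoq T c])
        moreover have "T (Suc N, 1) \<in> {1..N}" using T c unfolding ssytP_def by blast
        ultimately show False by simp
      qed
      then show ?thesis using False by (simp add: schurP_def)
    qed
    then show "x (Suc N) ^ card (cellsP p - cellsP q) * schurP q N x =
      x (Suc N) ^ (\<Sum>i\<in>{0..<Suc N}. p (i+1) - q (i+1)) * (if q (Suc N) = 0 then Dt N q x else 0)"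
      by (simp add: card_diff_cells[OF supp q])
  qed
  also have "\<dots> = Dt (Suc N) p x" by (rule det_side[of p N, OF mono supp, symmetric])
  finally show "schurP p (Suc N) x = Dt (Suc N) p x" .
  qed
qed

lemma cells_part: "cells lam = cellsP (part lam)"
  unfolding cells_def cellsP_def part_def by (auto split: if_splits)

theorem proposition6p1:
  fixes N :: nat and lam :: "nat list" and x :: "nat \<Rightarrow> 'a::comm_ring_1"
  assumes "is_partition lam" and "length lam \<le> N"
  shows "schur lam N x =
    det (mat N N (\<lambda>(j, k). hom (int (part lam (j + 1)) - int (j + 1) + int (k + 1))
                               {k + 1..N} x))"
proof -
  have srt: "sorted (rev lam)" using assms(1) by (simp add: is_partition_def)
  have h1: "\<forall>j\<ge>1. part lam (Suc j) \<le> part lam j"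
  proof (intro allI impI)
    fix j :: nat assume j: "j \<ge> 1"
    show "part lam (Suc j) \<le> part lam j"
    proof (cases "Suc j \<le> length lam")
      case True
      have "lam ! j \<le> lam ! (j - 1)" by (rule sorted_rev_nth_mono[OF srt]) (use True in auto)
      then show ?thesis using True j by (simp add: part_def)
    next
      case False then show ?thesis by (simp add: part_def)
    qed
  qed
  have h2: "\<forall>j>N. part lam j = 0" using assms(2) by (auto simp: part_def)
  have "schur lam N x = schurP (part lam) N x"
    unfolding schur_def schurP_def ssyt_def ssytP_def cells_part ..
  also have "\<dots> = Dt N (part lam) x" using main h1 h2 by blast
  finally show ?thesis unfolding Dt_def .
qed

end
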